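(* There is no non-trivial subfunctor $F$ of the identity functor on the category of abelian groups such that $F(A)$ is torsion-free for every abelian group $A$.
   Context: A subfunctor $F$ of the identity functor on abelian groups assigns to each abelian group $A$ a subgroup $F(A)\subseteq A$ with $f(F(A))\subseteq F(A')$ for every homomorphism $f:A\to A'$; it is non-trivial if $F(A)\neq 0$ for some $A$. *)

theory Defs
  imports "HOL-Algebra.Algebra"
begin

definition subfunctor_id :: "('a monoid \<Rightarrow> 'a set) \<Rightarrow> bool" where
  "subfunctor_id F \<longleftrightarrow>
     (\<forall>G. comm_group G \<longrightarrow> subgroup (F G) G) \<and>
     (\<forall>G H h. comm_group G \<longrightarrow> comm_group H \<longrightarrow> h \<in> hom G H \<longrightarrow> h ` (F G) \<subseteq> F H)"

definition nontrivial_subfunctor :: "('a monoid \<Rightarrow> 'a set) \<Rightarrow> bool" where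
  "nontrivial_subfunctor F \<longleftrightarrow> (\<exists>G. comm_group G \<and> F G \<noteq> {\<one>\<^bsub>G\<^esub>})"

definition torsion_free_in :: "'a monoid \<Rightarrow> 'a set \<Rightarrow> bool" where
  "torsion_free_in G S \<longleftrightarrow>
     (\<forall>x\<in>S. \<forall>n::nat. n > 0 \<longrightarrow> x [^]\<^bsub>G\<^esub> n = \<one>\<^bsub>G\<^esub> \<longrightarrow> x = \<one>\<^bsub>G\<^esub>)"

end

theory Submission
  imports Defs
begin

lemma (in comm_group) quot_rep:
  assumes H: "subgroup H G"
  defines "g \<equiv> \<lambda>a. SOME y. y \<in> H #> a"
  defines "Q \<equiv> \<lparr>carrier = g ` carrier G, monoid.mult = \<lambda>a b. g (a \<otimes> b), one = g \<one>\<rparr>"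
  shows "comm_group Q" "g \<in> hom G Q"
    "\<And>a b. a \<in> carrier G \<Longrightarrow> b \<in> carrier G \<Longrightarrow> g a = g b \<longleftrightarrow> H #> a = H #> b"
proof -
  have N: "normal H G" using H normal_iff_subgroup by blast
  have gin: "g a \<in> H #> a" if "a \<in> carrier G" for a
    unfolding g_def by (rule someI[of _ a]) (rule rcos_self[OF that H])
  have gc: "g a \<in> carrier G" if "a \<in> carrier G" for a
    using gin[OF that] r_coset_subset_G[OF subgroup.subset[OF H] that] by blast
  have gH: "H #> g a = H #> a" if "a \<in> carrier G" for a
    using repr_independence[OF gin[OF that] that H] by simp
  show eq: "g a = g b \<longleftrightarrow> H #> a = H #> b" if "a \<in> carrier G" "b \<in> carrier G" for a b
    using gH that by (metis g_def)
  have hm: "g (a \<otimes> b) = g (g a \<otimes> g b)" if "a \<in> carrier G" "b \<in> carrier G" for a b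
  proof -
    have "H #> (g a \<otimes> g b) = (H #> g a) <#> (H #> g b)"
      using normal.rcos_sum[OF N] gc that by simp
    also have "\<dots> = H #> (a \<otimes> b)" using gH that normal.rcos_sum[OF N] by simp
    finally show ?thesis unfolding g_def by simp
  qed
  show hom: "g \<in> hom G Q"
    unfolding hom_def Q_def using hm by auto
  have "comm_group (Q\<lparr>carrier := g ` carrier G, one := g \<one>\<rparr>)"
    by (rule hom_imp_img_comm_group[OF hom])
  moreover have "Q\<lparr>carrier := g ` carrier G, one := g \<one>\<rparr> = Q" unfolding Q_def by simp
  ultimately show "comm_group Q" by simp
qed

lemma main_aux:
  fixes F :: "'a monoid \<Rightarrow> 'a set" and G :: "'a monoid" (structure)
  assumes A: "subfunctor_id F \<and> nontrivial_subfunctor F \<and>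
            (\<forall>G. comm_group G \<longrightarrow> torsion_free_in G (F G))"
    and G: "comm_group G" and x: "x \<in> F G" "x \<noteq> \<one>"
  shows False
proof -
  interpret comm_group G by (rule G)
  have sg: "subgroup (F G) G" using A G unfolding subfunctor_id_def by blast
  have xc: "x \<in> carrier G" using x sg subgroup.subset by blast
  have tf: "\<And>n::nat. n > 0 \<Longrightarrow> x [^] n \<noteq> \<one>"
    using A G x unfolding torsion_free_in_def by blast
  define H where "H = generate G {x [^] (2::nat)}"
  have H: "subgroup H G" unfolding H_def by (rule generate_is_subgroup) (use xc in auto)
  have Heq: "H = {(x [^] (2::nat)) [^] (k::int) | k. k \<in> UNIV}"
    unfolding H_def by (rule generate_pow) (use xc in auto)
  define g where "g \<equiv> \<lambda>a. SOME y. y \<in> H #> a"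
  define Q where "Q \<equiv> \<lparr>carrier = g ` carrier G, monoid.mult = \<lambda>a b. g (a \<otimes> b), one = g \<one>\<rparr>"
  have Qg: "comm_group Q" and hom: "g \<in> hom G Q"
    and geq: "\<And>a b. a \<in> carrier G \<Longrightarrow> b \<in> carrier G \<Longrightarrow> g a = g b \<longleftrightarrow> H #> a = H #> b"
    using quot_rep[OF H] unfolding g_def Q_def by blast+
  have "g ` F G \<subseteq> F Q" using A G Qg hom unfolding subfunctor_id_def by blast
  then have gxF: "g x \<in> F Q" using x by blast
  have x2H: "x [^] (2::nat) \<in> H" unfolding Heq by (auto intro!: exI[of _ "1::int"] simp: xc int_pow_1)
  have "g x [^]\<^bsub>Q\<^esub> (2::nat) = g (x [^] (2::nat))"
    using hom_nat_pow[OF hom xc is_group comm_group.axioms(2)[OF Qg]] by simp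
  also have "\<dots> = g \<one>"
  proof -
    have "H #> x [^] (2::nat) = H" by (rule coset_join2[OF _ H x2H]) (simp add: xc)
    moreover have "H #> \<one> = H" using subgroup.subset[OF H] by simp
    ultimately show ?thesis using geq[OF nat_pow_closed[OF xc] one_closed] by simp
  qed
  also have "\<dots> = \<one>\<^bsub>Q\<^esub>" unfolding Q_def by simp
  finally have "g x [^]\<^bsub>Q\<^esub> (2::nat) = \<one>\<^bsub>Q\<^esub>" .
  moreover have "torsion_free_in Q (F Q)" using A Qg by blast
  then have "\<forall>n::nat. n > 0 \<longrightarrow> g x [^]\<^bsub>Q\<^esub> n = \<one>\<^bsub>Q\<^esub> \<longrightarrow> g x = \<one>\<^bsub>Q\<^esub>"
    using gxF unfolding torsion_free_in_def by blast
  ultimately have "g x = \<one>\<^bsub>Q\<^esub>" by (metis zero_less_numeral)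
  then have "g x = g \<one>" unfolding Q_def by simp
  then have "H #> x = H #> \<one>" using geq[OF xc one_closed] by blast
  also have "H #> \<one> = H" using subgroup.subset[OF H] by simp
  finally have "x \<in> H" using rcos_self[OF xc H] by simp
  then obtain k :: int where k: "x = (x [^] (2::nat)) [^] k" unfolding Heq by blast
  have "x [^] (2 * k - 1) = \<one>"
  proof -
    have "(x [^] (2::nat)) [^] k = x [^] (2 * k)"
    proof -
      have "x [^] (2::nat) = x [^] (2::int)" using int_pow_int[where G=G and x=x and n=2] by simp
      then show ?thesis using int_pow_pow[OF xc, of 2 k] by simp
    qed
    then have "x [^] (2 * k - 1) = x \<otimes> inv x" using k int_pow_diff[OF xc, of "2*k" 1] xc by simp
    then show ?thesis using xc by simp
  qed
  moreover have "2 * k - 1 \<noteq> 0" by presburger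
  ultimately show False
  proof (cases "2 * k - 1 > 0")
    case True
    have "x [^] (nat (2*k-1)) = \<one>"
      using int_pow_int[where G=G and x=x and n="nat (2*k-1)"] True \<open>x [^] (2 * k - 1) = \<one>\<close> by simp
    then show False using tf[of "nat (2*k-1)"] True by simp
  next
    case False
    then have "1 - 2 * k > 0" using \<open>2 * k - 1 \<noteq> 0\<close> by linarith
    moreover have "x [^] (1 - 2 * k) = \<one>"
      using \<open>x [^] (2 * k - 1) = \<one>\<close> int_pow_neg[OF xc, of "2*k-1"] by simp
    ultimately have "x [^] (nat (1 - 2*k)) = \<one>" "nat (1 - 2*k) > 0"
      using int_pow_int[where G=G and x=x and n="nat (1 - 2*k)"] by simp_all
    then show False using tf by blast
  qed
qed

theorem corollary3p18:
  fixes F :: "'a monoid \<Rightarrow> 'a set"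
  shows "\<not> (subfunctor_id F \<and> nontrivial_subfunctor F \<and>
            (\<forall>G. comm_group G \<longrightarrow> torsion_free_in G (F G)))"
proof
  assume A: "subfunctor_id F \<and> nontrivial_subfunctor F \<and>
            (\<forall>G. comm_group G \<longrightarrow> torsion_free_in G (F G))"
  then obtain G where G: "comm_group G" and ne: "F G \<noteq> {\<one>\<^bsub>G\<^esub>}"
    unfolding nontrivial_subfunctor_def by blast
  have sg: "subgroup (F G) G" using A G unfolding subfunctor_id_def by blast
  obtain x where x: "x \<in> F G" "x \<noteq> \<one>\<^bsub>G\<^esub>"
    using ne subgroup.one_closed[OF sg] by blast
  show False by (rule main_aux[OF A G x])
qed

end
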